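(* Let $H,\Delta\in\mathbb{C}^{n\times n}$ be Hermitian, let $H(t)=H+t\Delta$ for $t\in\mathbb{R}$, and let $f\in\mathbb{C}^n$ with $\|f\|_2=1$. Let $\lambda_1<\lambda_2<\dots<\lambda_m$ be the distinct eigenvalues of $H$. If $|t|\,\|\Delta\|_2<\gamma(H)/2$, then \[ W_1\big(\mu_f^{H},\mu_f^{H(t)}\big)\le \sum_{h=1}^{m-1}(\lambda_{h+1}-\lambda_h)\,\Big|\big\langle f,\big(P_{[h]}-P_{[h]}(t)\big)f\big\rangle\Big| + |t|\,\|\Delta\|_2 . \]
   Context: For a Hermitian matrix $M$ with distinct eigenvalues $\mathrm{spec}(M)$ and orthogonal eigenprojections $P_\lambda$, and a unit vector $f$, the power spectrum is $\mu_f^M=\sum_{\lambda\in\mathrm{spec}(M)}\langle f,P_\lambda f\rangle\delta_\lambda$, a probability measure on $\mathbb{R}$; $W_1$ is the 1-Wasserstein distance on $\mathbb{R}$; $\|\cdot\|_2$ is the spectral norm. $\gamma(H)=\min\{|\lambda-\mu|:\lambda\neq\mu,\ \lambda,\mu\in\mathrm{spec}(H)\}$ is the minimal gap between distinct eigenvalues (taken as $+\infty$ if $m=1$). When $|t|\|\Delta\|_2<\gamma(H)/2$, every eigenvalue of $H(t)$ lies within $|t|\|\Delta\|_2$ of exactly one $\lambda_j$; $P_h(t)$ denotes the orthogonal projection onto the sum of the eigenspaces of $H(t)$ whose eigenvalues lie within $|t|\|\Delta\|_2$ of $\lambda_h$, $P_{[h]}(t)=\sum_{j=1}^h P_j(t)$,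 and $P_{[h]}=P_{[h]}(0)$ is the projection onto the sum of the eigenspaces of $H$ for $\lambda_1,\dots,\lambda_h$. *)

theory Defs
  imports "HOL-Analysis.Analysis"
begin

definition cinner :: "complex^'n \<Rightarrow> complex^'n \<Rightarrow> complex" where
  "cinner x y = (\<Sum>i\<in>UNIV. cnj (x$i) * y$i)"

definition hermitian :: "complex^'n^'n \<Rightarrow> bool" where
  "hermitian A \<longleftrightarrow> (\<forall>i j. A$i$j = cnj (A$j$i))"

definition spec_norm :: "complex^'n^'n \<Rightarrow> real" where
  "spec_norm A = onorm (\<lambda>x. A *v x)"

text \<open>Real eigenvalues (all eigenvalues, for Hermitian matrices).\<close>
definition spec :: "complex^'n^'n \<Rightarrow> real set" where
  "spec M = {l. \<exists>v. v \<noteq> 0 \<and> M *v v = complex_of_real l *s v}"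

definition eigenspace :: "complex^'n^'n \<Rightarrow> real \<Rightarrow> (complex^'n) set" where
  "eigenspace M l = {v. M *v v = complex_of_real l *s v}"

definition orth_proj :: "(complex^'n) set \<Rightarrow> complex^'n^'n" where
  "orth_proj S = (THE P. \<forall>x. P *v x \<in> S \<and> (\<forall>y\<in>S. cinner y (x - P *v x) = 0))"

definition eigenproj :: "complex^'n^'n \<Rightarrow> real \<Rightarrow> complex^'n^'n" where
  "eigenproj M l = orth_proj (eigenspace M l)"

text \<open>Power spectrum mu_f^M, as a finitely supported weight function on the reals
  (weight of the Dirac mass at each point).\<close>
definition power_spectrum :: "complex^'n^'n \<Rightarrow> complex^'n \<Rightarrow> real \<Rightarrow> real" where
  "power_spectrum M f l = (if l \<in> spec M then Re (cinner f (eigenproj M l *v f)) else 0)"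

text \<open>1-Wasserstein distance between finitely supported measures on the reals given by
  weight functions: infimum of the transport cost over all couplings (which are
  necessarily finitely supported).\<close>
definition W1 :: "(real \<Rightarrow> real) \<Rightarrow> (real \<Rightarrow> real) \<Rightarrow> real" where
  "W1 \<mu> \<nu> = Inf {(\<Sum>p\<in>{p. g p \<noteq> 0}. \<bar>fst p - snd p\<bar> * g p) | g.
      finite {p. g p \<noteq> 0} \<and> (\<forall>p. 0 \<le> g p) \<and>
      (\<forall>x. (\<Sum>y\<in>{y. g (x,y) \<noteq> 0}. g (x,y)) = \<mu> x) \<and>
      (\<forall>y. (\<Sum>x\<in>{x. g (x,y) \<noteq> 0}. g (x,y)) = \<nu> y)}"

text \<open>Minimal gap between distinct eigenvalues; +infinity if there is only one.\<close>
definition gap :: "complex^'n^'n \<Rightarrow> ereal" where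
  "gap H = Inf {ereal \<bar>l - m\<bar> | l m. l \<in> spec H \<and> m \<in> spec H \<and> l \<noteq> m}"

definition Ph :: "complex^'n^'n \<Rightarrow> complex^'n^'n \<Rightarrow> (nat \<Rightarrow> real) \<Rightarrow> real \<Rightarrow> nat \<Rightarrow> complex^'n^'n" where
  "Ph H \<Delta> lam t h = orth_proj (span (\<Union>{eigenspace (H + t *\<^sub>R \<Delta>) \<mu> | \<mu>.
      \<mu> \<in> spec (H + t *\<^sub>R \<Delta>) \<and> \<bar>\<mu> - lam h\<bar> \<le> \<bar>t\<bar> * spec_norm \<Delta>}))"

definition Pcum :: "complex^'n^'n \<Rightarrow> complex^'n^'n \<Rightarrow> (nat \<Rightarrow> real) \<Rightarrow> real \<Rightarrow> nat \<Rightarrow> complex^'n^'n" where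
  "Pcum H \<Delta> lam t h = (\<Sum>j\<in>{1..h}. Ph H \<Delta> lam t j)"

end

theory Submission
  imports Defs
begin


lemma cinner_add_right: "cinner x (y + z) = cinner x y + cinner x z"
  by (simp add: cinner_def distrib_left sum.distrib)
lemma cinner_diff_right: "cinner x (y - z) = cinner x y - cinner x z"
  by (simp add: cinner_def right_diff_distrib sum_subtractf)
lemma cinner_scale_right: "cinner x (c *s y) = c * cinner x y"
  by (simp add: cinner_def sum_distrib_left mult_ac)
lemma cinner_scaleR_right: "cinner x (r *\<^sub>R y) = of_real r * cinner x y"
  unfolding cinner_def vector_scaleR_component by (simp add: scaleR_conv_of_real sum_distrib_left mult_ac)
lemma cinner_zero_right[simp]: "cinner x 0 = 0"
  by (simp add: cinner_def)
lemma cinner_zero_left[simp]: "cinner 0 x = 0"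
  by (simp add: cinner_def)
lemma cinner_sum_right: "cinner x (sum g A) = (\<Sum>a\<in>A. cinner x (g a))"
  by (simp add: cinner_def sum_component sum_distrib_left sum.swap[of _ A])
lemma cinner_commute: "cinner y x = cnj (cinner x y)"
  by (simp add: cinner_def mult.commute)
lemma cinner_add_left: "cinner (x + y) z = cinner x z + cinner y z"
  by (simp add: cinner_def distrib_right sum.distrib)
lemma cinner_diff_left: "cinner (x - y) z = cinner x z - cinner y z"
  by (simp add: cinner_def left_diff_distrib sum_subtractf)
lemma cinner_scale_left: "cinner (c *s x) y = cnj c * cinner x y"
  by (simp add: cinner_def sum_distrib_left mult_ac)
lemma cinner_sum_left: "cinner (sum g A) x = (\<Sum>a\<in>A. cinner (g a) x)"
  by (subst cinner_commute, simp add: cinner_sum_right cnj_sum, subst cinner_commute, simp)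
lemma cinner_self: "cinner x x = complex_of_real (norm x ^ 2)"
proof -
  have "norm x ^ 2 = (\<Sum>i\<in>UNIV. (cmod (x$i))^2)"
    by (simp add: norm_vec_def L2_set_def sum_nonneg)
  then have "complex_of_real (norm x ^ 2) = (\<Sum>i\<in>UNIV. complex_of_real ((cmod (x$i))^2))" by simp
  also have "\<dots> = (\<Sum>i\<in>UNIV. cnj (x$i) * x$i)"
    by (rule sum.cong, simp, subst complex_norm_square, simp add: mult.commute)
  finally show ?thesis by (simp add: cinner_def)
qed
lemma cinner_self_eq_0: "cinner x x = 0 \<longleftrightarrow> x = 0"
  by (simp add: cinner_self)
lemma Re_cinner_self: "Re (cinner x x) = norm x ^ 2"
  by (simp add: cinner_self)

lemma hermitian_cinner:
  assumes "hermitian H"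
  shows "cinner x (H *v y) = cinner (H *v x) y"
proof -
  have h: "cnj (H$j$i) = H$i$j" for i j
  proof -
    have "H$i$j = cnj (H$j$i)" using assms unfolding hermitian_def by blast
    then show ?thesis by simp
  qed
  have "cinner x (H *v y) = (\<Sum>i\<in>UNIV. \<Sum>j\<in>UNIV. cnj (x$i) * H$i$j * y$j)"
    by (simp add: cinner_def matrix_vector_mult_def sum_distrib_left mult_ac)
  also have "\<dots> = (\<Sum>j\<in>UNIV. \<Sum>i\<in>UNIV. cnj (x$i) * H$i$j * y$j)"
    by (rule sum.swap)
  also have "\<dots> = cinner (H *v x) y"
    unfolding cinner_def matrix_vector_mult_def
    by (simp only: vec_lambda_beta cnj_sum complex_cnj_mult h sum_distrib_right) (simp add: mult_ac)
  finally show ?thesis .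
qed

lemma hermitian_add: assumes a: "hermitian A" and b: "hermitian B" shows "hermitian (A + B)"
  unfolding hermitian_def
proof (intro allI)
  fix i j
  have "A$i$j = cnj (A$j$i)" "B$i$j = cnj (B$j$i)" using a b unfolding hermitian_def by blast+
  then show "(A + B)$i$j = cnj ((A + B)$j$i)" by simp
qed
lemma hermitian_scaleR: assumes a: "hermitian A" shows "hermitian (t *\<^sub>R A)"
  unfolding hermitian_def
proof (intro allI)
  fix i j
  have "A$i$j = cnj (A$j$i)" using a unfolding hermitian_def by blast
  then show "(t *\<^sub>R A)$i$j = cnj ((t *\<^sub>R A)$j$i)" unfolding vector_scaleR_component by (simp add: scaleR_conv_of_real)
qed

lemma hermitian_real:
  assumes "hermitian H" shows "cinner x (H *v x) = of_real (Re (cinner x (H *v x)))"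
proof -
  have "cnj (cinner x (H *v x)) = cinner x (H *v x)"
    using hermitian_cinner[OF assms, of x x] cinner_commute[of "H *v x" x] by simp
  then have "Im (cnj (cinner x (H *v x))) = Im (cinner x (H *v x))" by simp
  then have "Im (cinner x (H *v x)) = 0" by simp
  then show ?thesis by (simp add: complex_eq_iff)
qed


lemma inner_cinner: "x \<bullet> y = Re (cinner x y)"
  by (simp add: inner_vec_def cinner_def inner_complex_def)

lemma smult_of_real_scaleR: "(complex_of_real r) *s x = r *\<^sub>R x"
  unfolding vec_eq_iff vector_scaleR_component vector_smult_component by (simp add: scaleR_conv_of_real)

lemma norm_smult: "norm (c *s x) = cmod c * norm x"
proof -
  have cc: "cnj c * c = (complex_of_real (cmod c))^2" using complex_norm_square[of c] by (simp add: mult.commute)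
  have "complex_of_real (norm (c *s x) ^ 2) = cnj c * c * cinner x x"
    unfolding cinner_self[symmetric] cinner_scale_left cinner_scale_right by (simp add: mult_ac)
  also have "\<dots> = complex_of_real ((cmod c * norm x)^2)"
    unfolding cc cinner_self by (simp add: power_mult_distrib)
  finally have "complex_of_real (norm (c *s x) ^ 2) = complex_of_real ((cmod c * norm x)^2)" .
  then have "norm (c *s x) ^ 2 = (cmod c * norm x)^2" using of_real_eq_iff by blast
  then show ?thesis by (simp add: power2_eq_iff_nonneg)
qed


definition onset :: "(complex^'n) set \<Rightarrow> bool" where
  "onset F \<longleftrightarrow> (\<forall>u\<in>F. cinner u u = 1) \<and> (\<forall>u\<in>F. \<forall>v\<in>F. u \<noteq> v \<longrightarrow> cinner u v = 0)"

lemma onset_card: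
  fixes F :: "(complex^'n) set"
  assumes "onset F"
  shows "finite F \<and> card F \<le> CARD('n)"
proof -
  let ?i = "\<lambda>u::complex^'n. \<i> *s u"
  let ?G = "F \<union> ?i ` F"
  have one: "u \<in> F \<Longrightarrow> cinner u u = 1" for u using assms unfolding onset_def by blast
  have zero: "u \<in> F \<Longrightarrow> v \<in> F \<Longrightarrow> u \<noteq> v \<Longrightarrow> cinner u v = 0" for u v
    using assms unfolding onset_def by blast
  have cuv: "u \<in> F \<Longrightarrow> v \<in> F \<Longrightarrow> cinner u v = (if u = v then 1 else 0)" for u v
    using one zero by auto
  have orth: "pairwise orthogonal ?G"
    unfolding pairwise_def orthogonal_def inner_cinner
    by (auto simp: cinner_scale_left cinner_scale_right cuv)
  have nz: "0 \<notin> ?G"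
  proof
    assume "0 \<in> ?G"
    then obtain u where u: "u \<in> F" "0 = u \<or> 0 = \<i> *s u" by blast
    then have "cinner (\<i> *s u) (\<i> *s u) = 0 \<or> cinner u u = 0" by auto
    then show False using one[OF u(1)] by (simp add: cinner_scale_left cinner_scale_right)
  qed
  have ind: "independent ?G" by (rule pairwise_orthogonal_independent[OF orth nz])
  from independent_bound[OF ind] have finG: "finite ?G" and cG: "card ?G \<le> DIM(complex^'n)" by auto
  have finF: "finite F" using finG by auto
  have disj: "F \<inter> ?i ` F = {}"
  proof (rule ccontr)
    assume "F \<inter> ?i ` F \<noteq> {}"
    then obtain v where v: "v \<in> F" "\<i> *s v \<in> F" by blast
    have "cinner v (\<i> *s v) = \<i>" using one[OF v(1)] by (simp add: cinner_scale_right)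
    moreover have "cinner v (\<i> *s v) = 1 \<or> cinner v (\<i> *s v) = 0" using cuv[OF v(1) v(2)] by auto
    ultimately show False by auto
  qed
  have inj: "inj_on ?i F"
    by (rule inj_onI) (simp add: vec_eq_iff)
  have "card ?G = card F + card F"
    using card_Un_disjoint[OF finF finite_imageI[OF finF] disj] card_image[OF inj] by simp
  then show ?thesis using cG finF by (simp add: DIM_cart)
qed

lemma onset_expand:
  fixes F :: "(complex^'n) set"
  assumes fin: "finite F" and on: "onset F" and w: "u \<in> F"
  shows "cinner u (\<Sum>v\<in>F. c v *s v) = c u"
proof -
  have "cinner u (\<Sum>v\<in>F. c v *s v) = (\<Sum>v\<in>F. c v * cinner u v)"
    by (simp add: cinner_sum_right cinner_scale_right)
  also have "\<dots> = (\<Sum>v\<in>F. if v = u then c v else 0)"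
    by (rule sum.cong) (use on w in \<open>auto simp: onset_def\<close>)
  also have "\<dots> = c u" using fin w by simp
  finally show ?thesis .
qed

lemma complete_expand:
  fixes F :: "(complex^'n) set"
  assumes fin: "finite F" and on: "onset F" and comp: "\<forall>x. (\<forall>u\<in>F. cinner u x = 0) \<longrightarrow> x = 0"
  shows "x = (\<Sum>u\<in>F. cinner u x *s u)"
proof -
  let ?r = "x - (\<Sum>u\<in>F. cinner u x *s u)"
  have "\<forall>u\<in>F. cinner u ?r = 0"
    using onset_expand[OF fin on, where c="\<lambda>u. cinner u x"] by (simp add: cinner_diff_right)
  then have "?r = 0" using comp by blast
  then show ?thesis by simp
qed


lemma new_eigvec:
  fixes H :: "complex^'n^'n"
  assumes herm: "hermitian H" and on: "onset F"
    and eig: "\<forall>u\<in>F. H *v u = complex_of_real (Re (cinner u (H *v u))) *s u"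
    and x0: "x \<noteq> 0" and xF: "\<forall>u\<in>F. cinner u x = 0"
  shows "\<exists>v. v \<notin> F \<and> onset (insert v F) \<and> H *v v = complex_of_real (Re (cinner v (H *v v))) *s v"
proof -
  define W where "W = {y. \<forall>u\<in>F. cinner u y = 0}"
  define q where "q y = Re (cinner y (H *v y))" for y
  have Wsc: "y \<in> W \<Longrightarrow> c *s y \<in> W" for y c by (simp add: W_def cinner_scale_right)
  have Wadd: "y \<in> W \<Longrightarrow> z \<in> W \<Longrightarrow> y + z \<in> W" for y z by (simp add: W_def cinner_add_right)
  have Wdiff: "y \<in> W \<Longrightarrow> z \<in> W \<Longrightarrow> y - z \<in> W" for y z by (simp add: W_def cinner_diff_right)
  have HW: "y \<in> W \<Longrightarrow> H *v y \<in> W" for y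
  proof -
    assume y: "y \<in> W"
    { fix u assume u: "u \<in> F"
      have "cinner u (H *v y) = cinner (H *v u) y" by (rule hermitian_cinner[OF herm])
      also have "\<dots> = cnj (complex_of_real (Re (cinner u (H *v u)))) * cinner u y"
        using eig u by (metis cinner_scale_left)
      also have "\<dots> = 0" using y u by (simp add: W_def)
      finally have "cinner u (H *v y) = 0" . }
    then show ?thesis by (simp add: W_def)
  qed
  have cont: "continuous_on UNIV (\<lambda>y. cinner u y)" for u
    unfolding cinner_def by (intro continuous_intros)
  have "W = (\<Inter>u\<in>F. {y. cinner u y = 0})" by (auto simp: W_def)
  then have closedW: "closed W"
    by (simp add: closed_INT closed_Collect_eq cont)
  define S where "S = W \<inter> sphere 0 1"
  have compS: "compact S" unfolding S_def by (rule closed_Int_compact[OF closedW compact_sphere])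
  define y0 where "y0 = complex_of_real (1 / norm x) *s x"
  have "y0 \<in> W" using xF by (simp add: y0_def W_def cinner_scale_right)
  moreover have "norm y0 = 1" using x0 by (simp add: y0_def norm_smult norm_divide)
  ultimately have "y0 \<in> S" by (simp add: S_def)
  then have Sne: "S \<noteq> {}" by blast
  have contq: "continuous_on S q"
    unfolding q_def cinner_def matrix_vector_mult_def vec_lambda_beta by (intro continuous_intros)
  obtain v where vS: "v \<in> S" and vmax: "\<forall>y\<in>S. q y \<le> q v"
    using continuous_attains_sup[OF compS Sne contq] by blast
  have vW: "v \<in> W" and nv: "norm v = 1" using vS by (auto simp: S_def)
  have cvv: "cinner v v = 1" using nv by (simp add: cinner_self)
  define M where "M = q v"
  have alpha: "cinner v (H *v v) = complex_of_real M"
    unfolding M_def q_def by (rule hermitian_real[OF herm])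
  define w where "w = H *v v - complex_of_real M *s v"
  have wW: "w \<in> W" unfolding w_def by (intro Wdiff HW Wsc vW)
  have cvw: "cinner v w = 0" by (simp add: w_def cinner_diff_right cinner_scale_right alpha cvv)
  have cwv: "cinner w v = 0" using cvw cinner_commute[of w v] by simp
  have Hv: "H *v v = w + complex_of_real M *s v" by (simp add: w_def)
  have w0: "w = 0"
  proof (rule ccontr)
    assume wne: "w \<noteq> 0"
    define a where "a = norm w ^ 2"
    have apos: "a > 0" using wne by (simp add: a_def)
    define b where "b = q w - M * a"
    define s where "s = a / (\<bar>b\<bar> + 1)"
    have spos: "s > 0" using apos by (simp add: s_def)
    have sb: "s * \<bar>b\<bar> < a"
    proof -
      have "s * \<bar>b\<bar> = a * (\<bar>b\<bar> / (\<bar>b\<bar> + 1))" by (simp add: s_def)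
      also have "\<dots> < a * 1" using apos by (intro mult_strict_left_mono) auto
      finally show ?thesis by simp
    qed
    define z where "z = v + complex_of_real s *s w"
    have cww: "cinner w w = complex_of_real a" by (simp add: a_def cinner_self)
    have czz: "cinner z z = complex_of_real (1 + s^2 * a)"
      by (simp add: z_def cinner_add_left cinner_add_right cinner_scale_left cinner_scale_right
          cvv cvw cwv cww power2_eq_square)
    have cwHv: "cinner w (H *v v) = complex_of_real a"
      by (simp add: Hv cinner_add_right cinner_scale_right cwv cww)
    have cvHw: "cinner v (H *v w) = complex_of_real a"
      by (simp add: hermitian_cinner[OF herm] Hv cinner_add_left cinner_scale_left cvw cww)
    have Hz: "H *v z = H *v v + complex_of_real s *s (H *v w)"
      by (simp add: z_def matrix_vector_right_distrib vector_scalar_commute)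
    have "cinner z (H *v z) = cinner v (H *v v) + complex_of_real s * cinner v (H *v w)
        + complex_of_real s * cinner w (H *v v) + complex_of_real s * complex_of_real s * cinner w (H *v w)"
      unfolding Hz by (simp add: z_def cinner_add_left cinner_add_right cinner_scale_left cinner_scale_right algebra_simps)
    then have qz: "q z = M + 2 * s * a + s^2 * q w"
      by (simp add: q_def alpha cvHw cwHv power2_eq_square)
    have nz2: "norm z ^ 2 = 1 + s^2 * a"
      using czz[unfolded cinner_self of_real_eq_iff] .
    have znz: "norm z > 0"
    proof -
      have "norm z ^ 2 > 0" using nz2 apos by (simp add: add_pos_nonneg)
      then show ?thesis by (simp add: zero_less_norm_iff)
    qed
    define z' where "z' = complex_of_real (1 / norm z) *s z"
    have zW: "z \<in> W" unfolding z_def by (intro Wadd Wsc vW wW)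
    have "z' \<in> S" using zW znz by (simp add: S_def z'_def Wsc norm_smult norm_divide)
    then have "q z' \<le> M" using vmax by (simp add: M_def)
    moreover have "q z' = q z / norm z ^ 2"
      by (simp add: q_def z'_def vector_scalar_commute cinner_scale_left cinner_scale_right
          power2_eq_square)
    ultimately have "q z / norm z ^ 2 \<le> M" by simp
    then have "q z \<le> M * norm z ^ 2" using znz by (simp add: divide_le_eq mult.commute)
    then have le: "2 * s * a + s^2 * b \<le> 0" unfolding qz nz2 b_def by (simp add: algebra_simps power2_eq_square)
    have b1: "- \<bar>b\<bar> \<le> b" by simp
    have "s * (- \<bar>b\<bar>) \<le> s * b" using mult_left_mono[OF b1] spos by simp
    then have "s * b > - a" using sb by simp
    then have "s * (s * b) > s * (- a)" using spos mult_strict_left_mono by blast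
    then have "s^2 * b > - (s * a)" by (simp add: power2_eq_square mult.assoc)
    moreover have "s * a > 0" using spos apos by simp
    ultimately have "2 * s * a + s^2 * b > 0" by simp
    then show False using le by simp
  qed
  have Hv2: "H *v v = complex_of_real (Re (cinner v (H *v v))) *s v"
    using Hv w0 alpha by simp
  have vF: "v \<notin> F"
  proof
    assume "v \<in> F"
    then have "cinner v v = 0" using vW by (simp add: W_def)
    then show False using cvv by simp
  qed
  have "onset (insert v F)"
    unfolding onset_def
  proof (intro conjI ballI impI)
    fix u assume "u \<in> insert v F"
    then show "cinner u u = 1" using cvv on by (auto simp: onset_def)
  next
    fix u u' assume u: "u \<in> insert v F" and u': "u' \<in> insert v F" and ne: "u \<noteq> u'"
    have a1: "y \<in> F \<Longrightarrow> cinner y v = 0" for y using vW by (simp add: W_def)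
    have a2: "y \<in> F \<Longrightarrow> cinner v y = 0" for y using a1[of y] cinner_commute[of v y] by simp
    show "cinner u u' = 0" using u u' ne a1 a2 on by (auto simp: onset_def)
  qed
  then show ?thesis using vF Hv2 by blast
qed


definition eigset :: "complex^'n^'n \<Rightarrow> (complex^'n) set \<Rightarrow> bool" where
  "eigset H F \<longleftrightarrow> (\<forall>u\<in>F. H *v u = complex_of_real (Re (cinner u (H *v u))) *s u)"

lemma eigenbasis_exists:
  fixes H :: "complex^'n^'n" assumes herm: "hermitian H"
  shows "\<exists>B. finite B \<and> onset B \<and> eigset H B \<and> (\<forall>x. (\<forall>u\<in>B. cinner u x = 0) \<longrightarrow> x = 0)"
proof -
  have main: "\<forall>F. CARD('n) - card F = d \<longrightarrow> onset F \<longrightarrow> eigset H F \<longrightarrow>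
      (\<exists>B. finite B \<and> onset B \<and> eigset H B \<and> (\<forall>x. (\<forall>u\<in>B. cinner u x = 0) \<longrightarrow> x = 0))" for d
  proof (induction d rule: less_induct)
    case (less d)
    show ?case
    proof (intro allI impI)
      fix F :: "(complex^'n) set"
      assume d: "CARD('n) - card F = d" and on: "onset F" and eig: "eigset H F"
      have finF: "finite F" and cF: "card F \<le> CARD('n)" using onset_card[OF on] by auto
      show "\<exists>B. finite B \<and> onset B \<and> eigset H B \<and> (\<forall>x. (\<forall>u\<in>B. cinner u x = 0) \<longrightarrow> x = 0)"
      proof (cases "\<forall>x. (\<forall>u\<in>F. cinner u x = 0) \<longrightarrow> x = 0")
        case True
        then show ?thesis using finF on eig by blast
      next
        case False
        then obtain x where x0: "x \<noteq> 0" and xF: "\<forall>u\<in>F. cinner u x = 0" by blast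
        obtain v where vF: "v \<notin> F" and on2: "onset (insert v F)"
          and ev: "H *v v = complex_of_real (Re (cinner v (H *v v))) *s v"
          using new_eigvec[OF herm on _ x0 xF] eig unfolding eigset_def by blast
        have eig2: "eigset H (insert v F)" using eig ev by (simp add: eigset_def)
        have c2: "card (insert v F) = Suc (card F)" using finF vF by simp
        have "card (insert v F) \<le> CARD('n)" using onset_card[OF on2] by simp
        then have "CARD('n) - card (insert v F) < d" using d c2 by simp
        then show ?thesis using less.IH on2 eig2 by blast
      qed
    qed
  qed
  have "onset ({} :: (complex^'n) set)" "eigset H {}" by (simp_all add: onset_def eigset_def)
  then show ?thesis using main[of "CARD('n) - 0", rule_format, of "{}"] by simp
qed


definition outer :: "complex^'n \<Rightarrow> complex^'n^'n" where
  "outer u = (\<chi> i j. u$i * cnj (u$j))"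

definition projC :: "(complex^'n) set \<Rightarrow> complex^'n^'n" where
  "projC C = (\<Sum>u\<in>C. outer u)"

lemma outer_mult: "outer u *v x = cinner u x *s u"
  unfolding vec_eq_iff
proof
  fix i
  have "(outer u *v x) $ i = (\<Sum>j\<in>UNIV. u$i * cnj (u$j) * x$j)"
    by (simp add: outer_def matrix_vector_mult_def)
  also have "\<dots> = (\<Sum>j\<in>UNIV. cnj (u$j) * x$j) * u$i"
    by (subst sum_distrib_right) (simp add: mult_ac)
  finally show "(outer u *v x) $ i = (cinner u x *s u) $ i" by (simp add: cinner_def)
qed

lemma sum_matrix_vector_mult: "finite C \<Longrightarrow> (\<Sum>u\<in>C. A u) *v x = (\<Sum>u\<in>C. A u *v x)"
proof (induction C rule: finite_induct)
  case empty
  then show ?case by (simp add: vec_eq_iff matrix_vector_mult_def)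
next
  case (insert a F)
  then show ?case by (simp add: matrix_vector_mult_add_rdistrib)
qed

lemma projC_mult: "finite C \<Longrightarrow> projC C *v x = (\<Sum>u\<in>C. cinner u x *s u)"
  by (simp add: projC_def sum_matrix_vector_mult outer_mult)

lemma mv_scaleR: "A *v (r *\<^sub>R x) = r *\<^sub>R (A *v (x :: complex^'n))"
  by (simp only: smult_of_real_scaleR[symmetric] vector_scalar_commute)

lemma orth_proj_unique:
  fixes S :: "(complex^'n) set"
  assumes S: "subspace S"
    and P1: "\<forall>x. P *v x \<in> S" and P2: "\<forall>x. \<forall>y\<in>S. cinner y (x - P *v x) = 0"
  shows "orth_proj S = P"
  unfolding orth_proj_def
proof (rule the_equality)
  show "\<forall>x. P *v x \<in> S \<and> (\<forall>y\<in>S. cinner y (x - P *v x) = 0)" using P1 P2 by blast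
next
  fix P' assume P': "\<forall>x. P' *v x \<in> S \<and> (\<forall>y\<in>S. cinner y (x - P' *v x) = 0)"
  show "P' = P"
    unfolding matrix_eq
  proof
    fix x
    define d where "d = P' *v x - P *v x"
    have dS: "d \<in> S" unfolding d_def using P' P1 S by (intro subspace_diff) blast+
    have e1: "cinner d (x - P *v x) = 0" using P2 dS by blast
    have e2: "cinner d (x - P' *v x) = 0" using P' dS by blast
    have "cinner d ((x - P *v x) - (x - P' *v x)) = 0"
      using cinner_diff_right[of d "x - P *v x" "x - P' *v x"] e1 e2 by simp
    moreover have "(x - P *v x) - (x - P' *v x) = d" by (simp add: d_def)
    ultimately have "cinner d d = 0" by simp
    then show "P' *v x = P *v x" by (simp add: cinner_self_eq_0 d_def)
  qed
qed

lemma onset_subset: "onset B \<Longrightarrow> C \<subseteq> B \<Longrightarrow> onset C"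
  unfolding onset_def by blast

locale ebasis =
  fixes M :: "complex^'n^'n" and B :: "(complex^'n) set"
  assumes herm: "hermitian M" and fin: "finite B" and on: "onset B" and eig: "eigset M B"
    and comp: "\<forall>x. (\<forall>u\<in>B. cinner u x = 0) \<longrightarrow> x = 0"
begin

definition ev :: "complex^'n \<Rightarrow> real" where "ev u = Re (cinner u (M *v u))"

lemma expand: "x = (\<Sum>u\<in>B. cinner u x *s u)"
  by (rule complete_expand[OF fin on comp])

lemma eigv: "u \<in> B \<Longrightarrow> M *v u = complex_of_real (ev u) *s u"
  using eig by (simp add: eigset_def ev_def)

lemma cM: "u \<in> B \<Longrightarrow> cinner u (M *v x) = complex_of_real (ev u) * cinner u x"
  using hermitian_cinner[OF herm, of u x] eigv[of u] by (simp add: cinner_scale_left)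

lemma unit: "u \<in> B \<Longrightarrow> cinner u u = 1"
  using on by (simp add: onset_def)

lemma unz: "u \<in> B \<Longrightarrow> u \<noteq> 0"
  using unit by force

lemma eigsp_orth:
  assumes y: "y \<in> eigenspace M l" and u: "u \<in> B" and ne: "ev u \<noteq> l"
  shows "cinner u y = 0"
proof -
  have h1: "cinner u (M *v y) = complex_of_real (ev u) * cinner u y" by (rule cM[OF u])
  have h2: "cinner u (M *v y) = complex_of_real l * cinner u y"
    using y by (simp add: eigenspace_def cinner_scale_right)
  have "complex_of_real (ev u) * cinner u y = complex_of_real l * cinner u y" using trans[OF h1[symmetric] h2] .
  then have "cinner u y = 0 \<or> complex_of_real (ev u) = complex_of_real l" by (simp only: mult_cancel_right)
  then show ?thesis using ne by simp
qed

lemma spec_eq: "spec M = ev ` B"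
proof
  show "spec M \<subseteq> ev ` B"
  proof
    fix l assume "l \<in> spec M"
    then obtain v where v0: "v \<noteq> 0" and vl: "M *v v = complex_of_real l *s v" by (auto simp: spec_def)
    show "l \<in> ev ` B"
    proof (rule ccontr)
      assume "l \<notin> ev ` B"
      then have "\<forall>u\<in>B. cinner u v = 0"
        using eigsp_orth[of v l] vl by (force simp: eigenspace_def)
      then show False using comp v0 by blast
    qed
  qed
next
  show "ev ` B \<subseteq> spec M"
    using eigv unz by (auto simp: spec_def)
qed

lemma Bne: "B \<noteq> {}"
proof
  assume "B = {}"
  then have "(\<chi> i. (1::complex)) = (0 :: complex^'n)" using comp by blast
  then show False by (simp add: vec_eq_iff)
qed

lemma parseval: "norm x ^ 2 = (\<Sum>u\<in>B. (cmod (cinner u x))^2)"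
proof -
  have ex: "x = (\<Sum>u\<in>B. cinner u x *s u)" by (rule expand)
  have "cinner x x = cinner x (\<Sum>u\<in>B. cinner u x *s u)" by (simp only: ex[symmetric])
  also have "\<dots> = (\<Sum>u\<in>B. cinner u x * cinner x u)" by (simp add: cinner_sum_right cinner_scale_right)
  also have "\<dots> = (\<Sum>u\<in>B. complex_of_real ((cmod (cinner u x))^2))"
  proof (rule sum.cong)
    fix u show "cinner u x * cinner x u = complex_of_real ((cmod (cinner u x))^2)"
      using cinner_commute[of x u] complex_norm_square[of "cinner u x"] by simp
  qed simp
  finally have "complex_of_real (norm x ^ 2) = complex_of_real (\<Sum>u\<in>B. (cmod (cinner u x))^2)"
    by (simp add: cinner_self)
  then show ?thesis using of_real_eq_iff by blast
qed

lemma proj_char: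
  assumes C: "C \<subseteq> B" and S: "subspace S"
    and CS: "\<forall>u\<in>C. \<forall>c. c *s u \<in> S" and SC: "\<forall>y\<in>S. \<forall>u\<in>B - C. cinner u y = 0"
  shows "orth_proj S = projC C"
proof (rule orth_proj_unique[OF S])
  have finC: "finite C" using fin C finite_subset by blast
  have onC: "onset C" using onset_subset[OF on C] .
  show "\<forall>x. projC C *v x \<in> S"
    using finC CS S by (simp add: projC_mult subspace_sum)
  show "\<forall>x. \<forall>y\<in>S. cinner y (x - projC C *v x) = 0"
  proof (intro allI ballI)
    fix x y assume y: "y \<in> S"
    have ey: "y = (\<Sum>u\<in>B. cinner u y *s u)" by (rule expand)
    have "cinner y (x - projC C *v x) = cinner (\<Sum>u\<in>B. cinner u y *s u) (x - projC C *v x)"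
      by (simp only: ey[symmetric])
    also have "\<dots> = (\<Sum>u\<in>B. cnj (cinner u y) * cinner u (x - projC C *v x))"
      by (simp add: cinner_sum_left cinner_scale_left)
    also have "\<dots> = 0"
    proof (rule sum.neutral, rule ballI)
      fix u assume u: "u \<in> B"
      show "cnj (cinner u y) * cinner u (x - projC C *v x) = 0"
      proof (cases "u \<in> C")
        case True
        have "cinner u (projC C *v x) = cinner u x"
          using onset_expand[OF finC onC True, of "\<lambda>u. cinner u x"] by (simp add: projC_mult finC)
        then show ?thesis by (simp add: cinner_diff_right)
      next
        case False
        then show ?thesis using SC y u by simp
      qed
    qed
    finally show "cinner y (x - projC C *v x) = 0" .
  qed
qed

lemma subspace_eigenspace: "subspace (eigenspace M l)"
  unfolding subspace_def eigenspace_def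
  by (simp add: matrix_vector_right_distrib smult_of_real_scaleR[symmetric] vector_scalar_commute
      vector_add_ldistrib vector_smult_assoc mult.commute)

lemma eigenproj_eq: "eigenproj M l = projC {u\<in>B. ev u = l}"
  unfolding eigenproj_def
proof (rule proj_char)
  show "{u\<in>B. ev u = l} \<subseteq> B" by blast
  show "subspace (eigenspace M l)" by (rule subspace_eigenspace)
  show "\<forall>u\<in>{u\<in>B. ev u = l}. \<forall>c. c *s u \<in> eigenspace M l"
    using eigv by (auto simp: eigenspace_def vector_scalar_commute vector_smult_assoc mult.commute)
  show "\<forall>y\<in>eigenspace M l. \<forall>u\<in>B - {u\<in>B. ev u = l}. cinner u y = 0"
    using eigsp_orth by blast
qed

lemma cinner_projC: "C \<subseteq> B \<Longrightarrow> cinner f (projC C *v f) = complex_of_real (\<Sum>u\<in>C. (cmod (cinner u f))^2)"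
proof -
  assume C: "C \<subseteq> B"
  have finC: "finite C" using fin C finite_subset by blast
  have "cinner f (projC C *v f) = (\<Sum>u\<in>C. cinner u f * cinner f u)"
    by (simp add: projC_mult finC cinner_sum_right cinner_scale_right)
  also have "\<dots> = (\<Sum>u\<in>C. complex_of_real ((cmod (cinner u f))^2))"
  proof (rule sum.cong)
    fix u show "cinner u f * cinner f u = complex_of_real ((cmod (cinner u f))^2)"
      using cinner_commute[of f u] complex_norm_square[of "cinner u f"] by simp
  qed simp
  finally show ?thesis by simp
qed

lemma power_spectrum_eq: "power_spectrum M f l = (\<Sum>u\<in>{u\<in>B. ev u = l}. (cmod (cinner u f))^2)"
proof (cases "l \<in> spec M")
  case True
  then show ?thesis
    unfolding power_spectrum_def eigenproj_eq using cinner_projC[of "{u\<in>B. ev u = l}" f] by simp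
next
  case False
  then have e: "{u\<in>B. ev u = l} = {}" using spec_eq by auto
  show ?thesis unfolding e power_spectrum_def using False by simp
qed

end


context ebasis begin

lemma proj_span:
  "orth_proj (span (\<Union>{eigenspace M \<mu> | \<mu>. \<mu> \<in> spec M \<and> P \<mu>})) = projC {u\<in>B. P (ev u)}"
proof -
  have C: "{u\<in>B. P (ev u)} \<subseteq> B" by blast
  have S: "subspace (span (\<Union>{eigenspace M \<mu> | \<mu>. \<mu> \<in> spec M \<and> P \<mu>}))" by (rule subspace_span)
  have CS: "\<forall>u\<in>{u\<in>B. P (ev u)}. \<forall>c. c *s u \<in> span (\<Union>{eigenspace M \<mu> | \<mu>. \<mu> \<in> spec M \<and> P \<mu>})"
  proof (intro ballI allI)
    fix u c assume u: "u \<in> {u\<in>B. P (ev u)}"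
    have "c *s u \<in> eigenspace M (ev u)"
      using eigv u by (auto simp: eigenspace_def vector_scalar_commute vector_smult_assoc mult.commute)
    moreover have "ev u \<in> spec M" using u spec_eq by auto
    ultimately have "c *s u \<in> \<Union>{eigenspace M \<mu> | \<mu>. \<mu> \<in> spec M \<and> P \<mu>}" using u by blast
    then show "c *s u \<in> span (\<Union>{eigenspace M \<mu> | \<mu>. \<mu> \<in> spec M \<and> P \<mu>})" by (rule span_base)
  qed
  have SC: "\<forall>y\<in>span (\<Union>{eigenspace M \<mu> | \<mu>. \<mu> \<in> spec M \<and> P \<mu>}). \<forall>u\<in>B - {u\<in>B. P (ev u)}. cinner u y = 0"
  proof (intro ballI)
    fix y u assume y: "y \<in> span (\<Union>{eigenspace M \<mu> | \<mu>. \<mu> \<in> spec M \<and> P \<mu>})"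
      and u: "u \<in> B - {u\<in>B. P (ev u)}"
    have sub: "subspace {y. cinner u y = 0}"
      unfolding subspace_def by (simp add: cinner_add_right cinner_scaleR_right)
    show "cinner u y = 0"
    proof (rule span_induct[OF y sub])
      fix z assume "z \<in> \<Union>{eigenspace M \<mu> | \<mu>. \<mu> \<in> spec M \<and> P \<mu>}"
      then obtain \<mu> where z: "z \<in> eigenspace M \<mu>" and P: "P \<mu>" by blast
      have "ev u \<noteq> \<mu>" using u P by auto
      then show "cinner u z = 0" using eigsp_orth[OF z] u by simp
    qed
  qed
  show ?thesis by (rule proj_char[OF C S CS SC])
qed

end


definition ov :: "real \<Rightarrow> real \<Rightarrow> real \<Rightarrow> real \<Rightarrow> real" where
  "ov p q r s = max 0 (min q s - max p r)"

lemma ov_add: "p \<le> q \<Longrightarrow> a \<le> b \<Longrightarrow> b \<le> c \<Longrightarrow> ov p q a b + ov p q b c = ov p q a c"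
  unfolding ov_def max_def min_def by auto

lemma ov_same: "ov p q a a = 0"
  unfolding ov_def max_def min_def by auto

lemma ov_comm: "ov p q r s = ov r s p q"
  unfolding ov_def by (simp add: min.commute max.commute)

lemma ov_nonneg: "ov p q r s \<ge> 0"
  unfolding ov_def by simp

lemma tele:
  assumes mono: "\<And>j. s j \<le> s (Suc j)" and pq: "p \<le> q"
  shows "l \<le> n \<Longrightarrow> (\<Sum>j\<in>{Suc l..n}. ov p q (s (j - 1)) (s j)) = ov p q (s l) (s n)"
proof (induction n)
  case 0
  then show ?case by (simp add: ov_same)
next
  case (Suc n)
  show ?case
  proof (cases "l = Suc n")
    case True
    then show ?thesis by (simp add: ov_same)
  next
    case False
    then have ln: "l \<le> n" using Suc.prems by simp
    have "(\<Sum>j\<in>{Suc l..Suc n}. ov p q (s (j - 1)) (s j))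
        = (\<Sum>j\<in>{Suc l..n}. ov p q (s (j - 1)) (s j)) + ov p q (s n) (s (Suc n))"
      using ln by simp
    also have "\<dots> = ov p q (s l) (s n) + ov p q (s n) (s (Suc n))" using Suc.IH[OF ln] by simp
    also have "\<dots> = ov p q (s l) (s (Suc n))"
      by (rule ov_add[OF pq lift_Suc_mono_le[of s, OF mono ln] mono])
    finally show ?thesis .
  qed
qed

lemma cum_Suc: fixes a :: "nat \<Rightarrow> real" shows "(\<Sum>i\<in>{1..Suc j}. a i) = (\<Sum>i\<in>{1..j}. a i) + (a (Suc j) :: real)"
  by simp

lemma cum_mono: fixes a :: "nat \<Rightarrow> real" shows "(\<forall>i. 0 \<le> a i) \<Longrightarrow> (\<Sum>i\<in>{1..j}. a i) \<le> (\<Sum>i\<in>{1..Suc j}. (a i :: real))"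
  by simp

lemma cum_diff: fixes a :: "nat \<Rightarrow> real" assumes "1 \<le> i" shows "(\<Sum>k\<in>{1..i}. a k) - (\<Sum>k\<in>{1..i - 1}. a k) = (a i :: real)"
proof -
  obtain j where "i = Suc j" using assms by (cases i) auto
  then show ?thesis by simp
qed

lemma cum_le: fixes a :: "nat \<Rightarrow> real" assumes "\<forall>i. 0 \<le> a i" "i \<le> m" shows "(\<Sum>k\<in>{1..i}. a k) \<le> (\<Sum>k\<in>{1..m}. (a k :: real))"
  by (rule sum_mono2) (use assms in auto)


definition cum :: "(nat \<Rightarrow> real) \<Rightarrow> nat \<Rightarrow> real" where
  "cum a i = (\<Sum>k\<in>{1..i}. a k)"

definition cpl :: "(nat \<Rightarrow> real) \<Rightarrow> (nat \<Rightarrow> real) \<Rightarrow> nat \<Rightarrow> nat \<Rightarrow> real" where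
  "cpl a c i j = ov (cum a (i - 1)) (cum a i) (cum c (j - 1)) (cum c j)"

lemma cpl_swap: "cpl c a j i = cpl a c i j"
  unfolding cpl_def by (rule ov_comm)

lemma cpl_nonneg: "cpl a c i j \<ge> 0"
  unfolding cpl_def by (rule ov_nonneg)

lemma cum_0[simp]: "cum a 0 = 0" by (simp add: cum_def)

lemma cum_mono': "\<forall>i. 0 \<le> a i \<Longrightarrow> cum a j \<le> cum a (Suc j)"
  by (simp add: cum_def)

lemma cum_nonneg: "\<forall>i. 0 \<le> a i \<Longrightarrow> cum a j \<ge> 0"
  by (simp add: cum_def sum_nonneg)

lemma cum_le': "\<forall>i. 0 \<le> a i \<Longrightarrow> i \<le> m \<Longrightarrow> cum a i \<le> cum a m"
  unfolding cum_def by (rule cum_le)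

lemma cum_prev: "1 \<le> i \<Longrightarrow> cum a i = cum a (i - 1) + a i"
  using cum_diff[of i a] by (simp add: cum_def)

lemma cpl_rows:
  assumes a0: "\<forall>i. 0 \<le> a i" and c0: "\<forall>i. 0 \<le> c i" and tot: "cum a m = cum c m"
    and i: "i \<in> {1..m}"
  shows "(\<Sum>j\<in>{1..m}. cpl a c i j) = a i"
proof -
  have pq: "cum a (i - 1) \<le> cum a i" using cum_prev[of i a] i a0 by simp
  have "(\<Sum>j\<in>{Suc 0..m}. ov (cum a (i - 1)) (cum a i) (cum c (j - 1)) (cum c j))
      = ov (cum a (i - 1)) (cum a i) (cum c 0) (cum c m)"
    by (rule tele[where s="cum c", OF cum_mono'[OF c0] pq]) simp
  also have "\<dots> = max 0 (min (cum a i) (cum c m) - max (cum a (i - 1)) 0)" by (simp add: ov_def)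
  also have "\<dots> = cum a i - cum a (i - 1)"
    using cum_le'[OF a0, of i m] i tot pq cum_nonneg[OF a0, of "i - 1"] by simp
  also have "\<dots> = a i" using cum_prev[of i a] i by simp
  finally show ?thesis by (simp add: cpl_def)
qed

lemma cpl_cols:
  assumes a0: "\<forall>i. 0 \<le> a i" and c0: "\<forall>i. 0 \<le> c i" and tot: "cum a m = cum c m"
    and j: "j \<in> {1..m}"
  shows "(\<Sum>i\<in>{1..m}. cpl a c i j) = c j"
  using cpl_rows[OF c0 a0 tot[symmetric] j] by (simp add: cpl_swap)

lemma triple_swap:
  fixes p :: "'i \<Rightarrow> 'j \<Rightarrow> real"
  shows "(\<Sum>i\<in>I. \<Sum>j\<in>J. p i j * (\<Sum>h\<in>K. d h * e i j h)) = (\<Sum>h\<in>K. d h * (\<Sum>i\<in>I. \<Sum>j\<in>J. p i j * e i j h))"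
proof -
  have "(\<Sum>i\<in>I. \<Sum>j\<in>J. p i j * (\<Sum>h\<in>K. d h * e i j h)) = (\<Sum>i\<in>I. \<Sum>j\<in>J. \<Sum>h\<in>K. d h * (p i j * e i j h))"
    by (simp add: sum_distrib_left mult_ac)
  also have "\<dots> = (\<Sum>i\<in>I. \<Sum>h\<in>K. \<Sum>j\<in>J. d h * (p i j * e i j h))"
    by (rule sum.cong[OF refl], rule sum.swap)
  also have "\<dots> = (\<Sum>h\<in>K. \<Sum>i\<in>I. \<Sum>j\<in>J. d h * (p i j * e i j h))"
    by (rule sum.swap)
  also have "\<dots> = (\<Sum>h\<in>K. d h * (\<Sum>i\<in>I. \<Sum>j\<in>J. p i j * e i j h))"
    by (simp add: sum_distrib_left)
  finally show ?thesis .
qed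

lemma ind_sum:
  fixes x :: "nat \<Rightarrow> real"
  assumes i: "i \<in> {1..m}" and j: "j \<in> {1..m}"
  shows "(\<Sum>h\<in>{1..m-1}. (x (Suc h) - x h) * (if i \<le> h \<and> h < j then 1 else 0)) = (if i \<le> j then x j - x i else 0)"
proof (cases "i \<le> j")
  case True
  have "(\<Sum>h\<in>{1..m-1}. (x (Suc h) - x h) * (if i \<le> h \<and> h < j then 1 else 0))
      = (\<Sum>h\<in>{1..m-1}. if i \<le> h \<and> h < j then x (Suc h) - x h else 0)"
    by (rule sum.cong) auto
  also have "\<dots> = (\<Sum>h\<in>{h\<in>{1..m-1}. i \<le> h \<and> h < j}. x (Suc h) - x h)"
    by (rule sum.inter_filter[symmetric]) simp
  also have "{h\<in>{1..m-1}. i \<le> h \<and> h < j} = {i..<j}" using i j by auto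
  also have "(\<Sum>h\<in>{i..<j}. x (Suc h) - x h) = x j - x i" by (rule sum_Suc_diff'[OF True])
  finally show ?thesis using True by simp
next
  case False
  then show ?thesis by (intro trans[OF sum.neutral]) auto
qed

lemma cross1:
  assumes a0: "\<forall>i. 0 \<le> a i" and c0: "\<forall>i. 0 \<le> c i" and tot: "cum a m = cum c m"
    and h: "h \<le> m"
  shows "(\<Sum>i\<in>{1..m}. \<Sum>j\<in>{1..m}. cpl a c i j * (if i \<le> h \<and> h < j then 1 else 0)) = max 0 (cum a h - cum c h)"
proof -
  define G where "G i = (\<Sum>j\<in>{Suc h..m}. cpl a c i j)" for i
  have step1: "(\<Sum>j\<in>{1..m}. cpl a c i j * (if i \<le> h \<and> h < j then 1 else 0)) = (if i \<le> h then G i else 0)" for i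
  proof (cases "i \<le> h")
    case True
    have "(\<Sum>j\<in>{1..m}. cpl a c i j * (if i \<le> h \<and> h < j then 1 else 0)) = (\<Sum>j\<in>{1..m}. if h < j then cpl a c i j else 0)"
      using True by (intro sum.cong) auto
    also have "\<dots> = (\<Sum>j\<in>{j\<in>{1..m}. h < j}. cpl a c i j)" by (rule sum.inter_filter[symmetric]) simp
    also have "{j\<in>{1..m}. h < j} = {Suc h..m}" by auto
    finally show ?thesis using True by (simp add: G_def)
  next
    case False
    then show ?thesis by (intro trans[OF sum.neutral]) auto
  qed
  have "(\<Sum>i\<in>{1..m}. \<Sum>j\<in>{1..m}. cpl a c i j * (if i \<le> h \<and> h < j then 1 else 0)) = (\<Sum>i\<in>{1..m}. if i \<le> h then G i else 0)"
    using step1 by simp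
  also have "\<dots> = (\<Sum>i\<in>{i\<in>{1..m}. i \<le> h}. G i)" by (rule sum.inter_filter[symmetric]) simp
  also have "{i\<in>{1..m}. i \<le> h} = {Suc 0..h}" using h by auto
  also have "(\<Sum>i\<in>{Suc 0..h}. G i) = (\<Sum>i\<in>{Suc 0..h}. ov (cum c h) (cum c m) (cum a (i - 1)) (cum a i))"
  proof (rule sum.cong[OF refl])
    fix i assume i: "i \<in> {Suc 0..h}"
    have pq: "cum a (i - 1) \<le> cum a i" using cum_prev[of i a] i a0 by simp
    have "G i = (\<Sum>j\<in>{Suc h..m}. ov (cum a (i - 1)) (cum a i) (cum c (j - 1)) (cum c j))"
      by (simp add: G_def cpl_def)
    also have "\<dots> = ov (cum a (i - 1)) (cum a i) (cum c h) (cum c m)"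
      by (rule tele[where s="cum c", OF cum_mono'[OF c0] pq h])
    finally show "G i = ov (cum c h) (cum c m) (cum a (i - 1)) (cum a i)" by (simp add: ov_comm)
  qed
  also have "\<dots> = ov (cum c h) (cum c m) (cum a 0) (cum a h)"
    by (rule tele[where s="cum a", OF cum_mono'[OF a0] cum_le'[OF c0 h]]) simp
  also have "\<dots> = max 0 (cum a h - cum c h)"
    using cum_le'[OF a0 h] tot cum_nonneg[OF c0, of h] by (simp add: ov_def)
  finally show ?thesis .
qed

lemma cross2:
  assumes a0: "\<forall>i. 0 \<le> a i" and c0: "\<forall>i. 0 \<le> c i" and tot: "cum a m = cum c m"
    and h: "h \<le> m"
  shows "(\<Sum>i\<in>{1..m}. \<Sum>j\<in>{1..m}. cpl a c i j * (if j \<le> h \<and> h < i then 1 else 0)) = max 0 (cum c h - cum a h)"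
proof -
  have "(\<Sum>i\<in>{1..m}. \<Sum>j\<in>{1..m}. cpl a c i j * (if j \<le> h \<and> h < i then 1 else 0))
      = (\<Sum>j\<in>{1..m}. \<Sum>i\<in>{1..m}. cpl c a j i * (if j \<le> h \<and> h < i then 1 else 0))"
    by (subst sum.swap) (simp add: cpl_swap)
  also have "\<dots> = max 0 (cum c h - cum a h)" by (rule cross1[OF c0 a0 tot[symmetric] h])
  finally show ?thesis .
qed

lemma line_coupling:
  fixes a c x :: "nat \<Rightarrow> real"
  assumes a0: "\<forall>i. 0 \<le> a i" and c0: "\<forall>i. 0 \<le> c i" and tot: "cum a m = cum c m"
    and xmono: "\<And>i j. i \<in> {1..m} \<Longrightarrow> j \<in> {1..m} \<Longrightarrow> i \<le> j \<Longrightarrow> x i \<le> x j"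
  shows "(\<Sum>i\<in>{1..m}. \<Sum>j\<in>{1..m}. cpl a c i j * \<bar>x i - x j\<bar>)
      = (\<Sum>h\<in>{1..m-1}. (x (h + 1) - x h) * \<bar>cum a h - cum c h\<bar>)"
proof -
  let ?I = "\<lambda>i j h. (if i \<le> h \<and> h < j then 1 else 0) + (if j \<le> h \<and> h < i then (1::real) else 0)"
  have absd: "\<bar>x i - x j\<bar> = (\<Sum>h\<in>{1..m-1}. (x (Suc h) - x h) * ?I i j h)" if i: "i \<in> {1..m}" and j: "j \<in> {1..m}" for i j
  proof -
    have "(\<Sum>h\<in>{1..m-1}. (x (Suc h) - x h) * ?I i j h)
        = (\<Sum>h\<in>{1..m-1}. (x (Suc h) - x h) * (if i \<le> h \<and> h < j then 1 else 0))
        + (\<Sum>h\<in>{1..m-1}. (x (Suc h) - x h) * (if j \<le> h \<and> h < i then 1 else 0))"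
      by (simp add: distrib_left sum.distrib)
    also have "\<dots> = (if i \<le> j then x j - x i else 0) + (if j \<le> i then x i - x j else 0)"
      using ind_sum[OF i j, of x] ind_sum[OF j i, of x] by simp
    also have "\<dots> = \<bar>x i - x j\<bar>" using xmono[OF i j] xmono[OF j i] by auto
    finally show ?thesis by simp
  qed
  have "(\<Sum>i\<in>{1..m}. \<Sum>j\<in>{1..m}. cpl a c i j * \<bar>x i - x j\<bar>)
      = (\<Sum>i\<in>{1..m}. \<Sum>j\<in>{1..m}. cpl a c i j * (\<Sum>h\<in>{1..m-1}. (x (Suc h) - x h) * ?I i j h))"
    by (intro sum.cong refl) (simp add: absd)
  also have "\<dots> = (\<Sum>h\<in>{1..m-1}. (x (Suc h) - x h) * (\<Sum>i\<in>{1..m}. \<Sum>j\<in>{1..m}. cpl a c i j * ?I i j h))"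
    by (rule triple_swap)
  also have "\<dots> = (\<Sum>h\<in>{1..m-1}. (x (h + 1) - x h) * \<bar>cum a h - cum c h\<bar>)"
  proof (rule sum.cong[OF refl])
    fix h assume h: "h \<in> {1..m-1}"
    then have hm: "h \<le> m" by auto
    have "(\<Sum>i\<in>{1..m}. \<Sum>j\<in>{1..m}. cpl a c i j * ?I i j h)
        = (\<Sum>i\<in>{1..m}. \<Sum>j\<in>{1..m}. cpl a c i j * (if i \<le> h \<and> h < j then 1 else 0))
        + (\<Sum>i\<in>{1..m}. \<Sum>j\<in>{1..m}. cpl a c i j * (if j \<le> h \<and> h < i then 1 else 0))"
      by (simp only: distrib_left sum.distrib)
    also have "\<dots> = max 0 (cum a h - cum c h) + max 0 (cum c h - cum a h)"
      using cross1[OF a0 c0 tot hm] cross2[OF a0 c0 tot hm] by simp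
    also have "\<dots> = \<bar>cum a h - cum c h\<bar>" by auto
    finally show "(x (Suc h) - x h) * (\<Sum>i\<in>{1..m}. \<Sum>j\<in>{1..m}. cpl a c i j * ?I i j h)
        = (x (h + 1) - x h) * \<bar>cum a h - cum c h\<bar>" by simp
  qed
  finally show ?thesis .
qed


lemma regroup:
  fixes w :: "'b \<Rightarrow> real" and k :: "'b \<Rightarrow> nat"
  assumes fin: "finite B" and fK: "finite K" and kK: "k ` B \<subseteq> K"
  shows "(\<Sum>v\<in>B. h (k v) * (w v / (\<Sum>u\<in>{u\<in>B. k u = k v}. w u)))
       = (\<Sum>i\<in>K. if (\<Sum>u\<in>{u\<in>B. k u = i}. w u) = 0 then 0 else h i)"
proof -
  have "(\<Sum>v\<in>B. h (k v) * (w v / (\<Sum>u\<in>{u\<in>B. k u = k v}. w u)))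
      = (\<Sum>i\<in>K. \<Sum>v\<in>{v\<in>B. k v = i}. h (k v) * (w v / (\<Sum>u\<in>{u\<in>B. k u = k v}. w u)))"
    by (rule sum.group[OF fin fK kK, symmetric])
  also have "\<dots> = (\<Sum>i\<in>K. if (\<Sum>u\<in>{u\<in>B. k u = i}. w u) = 0 then 0 else h i)"
  proof (rule sum.cong[OF refl])
    fix i assume "i \<in> K"
    have "(\<Sum>v\<in>{v\<in>B. k v = i}. h (k v) * (w v / (\<Sum>u\<in>{u\<in>B. k u = k v}. w u)))
        = (\<Sum>v\<in>{v\<in>B. k v = i}. h i / (\<Sum>u\<in>{u\<in>B. k u = i}. w u) * w v)"
      by (rule sum.cong) auto
    also have "\<dots> = h i / (\<Sum>u\<in>{u\<in>B. k u = i}. w u) * (\<Sum>v\<in>{v\<in>B. k v = i}. w v)"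
      by (simp add: sum_distrib_left)
    also have "\<dots> = (if (\<Sum>u\<in>{u\<in>B. k u = i}. w u) = 0 then 0 else h i)" by simp
    finally show "(\<Sum>v\<in>{v\<in>B. k v = i}. h (k v) * (w v / (\<Sum>u\<in>{u\<in>B. k u = k v}. w u)))
        = (if (\<Sum>u\<in>{u\<in>B. k u = i}. w u) = 0 then 0 else h i)" .
  qed
  finally show ?thesis .
qed

lemma W1_le:
  fixes \<rho> :: "'a \<Rightarrow> 'b \<Rightarrow> real" and \<phi> :: "'a \<Rightarrow> real" and \<psi> :: "'b \<Rightarrow> real"
  assumes fI: "finite I" and fU: "finite U" and r0: "\<forall>i u. 0 \<le> \<rho> i u"
    and mu: "\<forall>x. \<mu> x = (\<Sum>i\<in>{i\<in>I. \<phi> i = x}. \<Sum>u\<in>U. \<rho> i u)"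
    and nu: "\<forall>y. \<nu> y = (\<Sum>u\<in>{u\<in>U. \<psi> u = y}. \<Sum>i\<in>I. \<rho> i u)"
  shows "W1 \<mu> \<nu> \<le> (\<Sum>i\<in>I. \<Sum>u\<in>U. \<bar>\<phi> i - \<psi> u\<bar> * \<rho> i u)"
proof -
  define g where "g p = (\<Sum>i\<in>{i\<in>I. \<phi> i = fst p}. \<Sum>u\<in>{u\<in>U. \<psi> u = snd p}. \<rho> i u)" for p
  have g0: "\<forall>p. 0 \<le> g p" unfolding g_def using r0 by (simp add: sum_nonneg)
  have gsupp: "{p. g p \<noteq> 0} \<subseteq> \<phi> ` I \<times> \<psi> ` U"
  proof
    fix p assume "p \<in> {p. g p \<noteq> 0}"
    then have gp: "g p \<noteq> 0" by simp
    have e1: "{i\<in>I. \<phi> i = fst p} \<noteq> {}"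
    proof
      assume e: "{i\<in>I. \<phi> i = fst p} = {}"
      have "g p = 0" unfolding g_def e by simp
      then show False using gp by simp
    qed
    have e2: "{u\<in>U. \<psi> u = snd p} \<noteq> {}"
    proof
      assume e: "{u\<in>U. \<psi> u = snd p} = {}"
      have "g p = 0" unfolding g_def e by simp
      then show False using gp by simp
    qed
    obtain i where i: "i \<in> I" "\<phi> i = fst p" using e1 by blast
    obtain u where u: "u \<in> U" "\<psi> u = snd p" using e2 by blast
    have "p = (\<phi> i, \<psi> u)" using i u by (simp add: prod_eq_iff)
    then show "p \<in> \<phi> ` I \<times> \<psi> ` U" using i u by blast
  qed
  have finS: "finite (\<phi> ` I \<times> \<psi> ` U)" using fI fU by simp
  have fins: "finite {p. g p \<noteq> 0}" using finite_subset[OF gsupp finS] .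
  have marg1: "(\<Sum>y\<in>{y. g (x, y) \<noteq> 0}. g (x, y)) = \<mu> x" for x
  proof -
    have sub: "{y. g (x, y) \<noteq> 0} \<subseteq> \<psi> ` U" using gsupp by auto
    have "(\<Sum>y\<in>{y. g (x, y) \<noteq> 0}. g (x, y)) = (\<Sum>y\<in>\<psi> ` U. g (x, y))"
      by (rule sum.mono_neutral_left) (use sub fU in auto)
    also have "\<dots> = (\<Sum>y\<in>\<psi> ` U. \<Sum>i\<in>{i\<in>I. \<phi> i = x}. \<Sum>u\<in>{u\<in>U. \<psi> u = y}. \<rho> i u)"
      unfolding g_def by simp
    also have "\<dots> = (\<Sum>i\<in>{i\<in>I. \<phi> i = x}. \<Sum>y\<in>\<psi> ` U. \<Sum>u\<in>{u\<in>U. \<psi> u = y}. \<rho> i u)"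
      by (rule sum.swap)
    also have "\<dots> = (\<Sum>i\<in>{i\<in>I. \<phi> i = x}. \<Sum>u\<in>U. \<rho> i u)"
      by (rule sum.cong[OF refl], rule sum.group[OF fU]) (use fU in auto)
    finally show ?thesis using mu by simp
  qed
  have marg2: "(\<Sum>x\<in>{x. g (x, y) \<noteq> 0}. g (x, y)) = \<nu> y" for y
  proof -
    have sub: "{x. g (x, y) \<noteq> 0} \<subseteq> \<phi> ` I" using gsupp by auto
    have "(\<Sum>x\<in>{x. g (x, y) \<noteq> 0}. g (x, y)) = (\<Sum>x\<in>\<phi> ` I. g (x, y))"
      by (rule sum.mono_neutral_left) (use sub fI in auto)
    also have "\<dots> = (\<Sum>x\<in>\<phi> ` I. \<Sum>i\<in>{i\<in>I. \<phi> i = x}. \<Sum>u\<in>{u\<in>U. \<psi> u = y}. \<rho> i u)"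
      unfolding g_def by simp
    also have "\<dots> = (\<Sum>i\<in>I. \<Sum>u\<in>{u\<in>U. \<psi> u = y}. \<rho> i u)"
      by (rule sum.group[OF fI]) (use fI in auto)
    also have "\<dots> = (\<Sum>u\<in>{u\<in>U. \<psi> u = y}. \<Sum>i\<in>I. \<rho> i u)" by (rule sum.swap)
    finally show ?thesis using nu by simp
  qed
  have cost: "(\<Sum>p\<in>{p. g p \<noteq> 0}. \<bar>fst p - snd p\<bar> * g p) = (\<Sum>i\<in>I. \<Sum>u\<in>U. \<bar>\<phi> i - \<psi> u\<bar> * \<rho> i u)"
  proof -
    have "(\<Sum>p\<in>{p. g p \<noteq> 0}. \<bar>fst p - snd p\<bar> * g p) = (\<Sum>p\<in>\<phi> ` I \<times> \<psi> ` U. \<bar>fst p - snd p\<bar> * g p)"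
      by (rule sum.mono_neutral_left[OF finS gsupp]) auto
    also have "\<dots> = (\<Sum>x\<in>\<phi> ` I. \<Sum>y\<in>\<psi> ` U. \<bar>x - y\<bar> * g (x, y))"
      by (simp add: sum.cartesian_product split_def)
    also have "\<dots> = (\<Sum>x\<in>\<phi> ` I. \<Sum>y\<in>\<psi> ` U. \<Sum>i\<in>{i\<in>I. \<phi> i = x}. \<Sum>u\<in>{u\<in>U. \<psi> u = y}. \<bar>\<phi> i - \<psi> u\<bar> * \<rho> i u)"
      unfolding g_def by (simp add: sum_distrib_left)
    also have "\<dots> = (\<Sum>x\<in>\<phi> ` I. \<Sum>i\<in>{i\<in>I. \<phi> i = x}. \<Sum>y\<in>\<psi> ` U. \<Sum>u\<in>{u\<in>U. \<psi> u = y}. \<bar>\<phi> i - \<psi> u\<bar> * \<rho> i u)"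
      by (rule sum.cong[OF refl], rule sum.swap)
    also have "\<dots> = (\<Sum>i\<in>I. \<Sum>y\<in>\<psi> ` U. \<Sum>u\<in>{u\<in>U. \<psi> u = y}. \<bar>\<phi> i - \<psi> u\<bar> * \<rho> i u)"
      by (rule sum.group[OF fI]) (use fI in auto)
    also have "\<dots> = (\<Sum>i\<in>I. \<Sum>u\<in>U. \<bar>\<phi> i - \<psi> u\<bar> * \<rho> i u)"
      by (rule sum.cong[OF refl], rule sum.group[OF fU]) (use fU in auto)
    finally show ?thesis .
  qed
  let ?S = "{(\<Sum>p\<in>{p. g p \<noteq> 0}. \<bar>fst p - snd p\<bar> * g p) | g.
      finite {p. g p \<noteq> 0} \<and> (\<forall>p. 0 \<le> g p) \<and>
      (\<forall>x. (\<Sum>y\<in>{y. g (x,y) \<noteq> 0}. g (x,y)) = \<mu> x) \<and>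
      (\<forall>y. (\<Sum>x\<in>{x. g (x,y) \<noteq> 0}. g (x,y)) = \<nu> y)}"
  have mem: "(\<Sum>p\<in>{p. g p \<noteq> 0}. \<bar>fst p - snd p\<bar> * g p) \<in> ?S"
    using fins g0 marg1 marg2 by blast
  have bdd: "bdd_below ?S"
  proof (rule bdd_belowI)
    fix s assume "s \<in> ?S"
    then obtain g' where sg: "s = (\<Sum>p\<in>{p. g' p \<noteq> 0}. \<bar>fst p - snd p\<bar> * g' p)" and g'0: "\<forall>p. 0 \<le> g' p" by blast
    have "0 \<le> (\<Sum>p\<in>{p. g' p \<noteq> 0}. \<bar>fst p - snd p\<bar> * g' p)"
        by (intro sum_nonneg mult_nonneg_nonneg abs_ge_zero g'0[rule_format])
    then show "0 \<le> s" using sg by simp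
  qed
  have "W1 \<mu> \<nu> \<le> (\<Sum>p\<in>{p. g p \<noteq> 0}. \<bar>fst p - snd p\<bar> * g p)"
    unfolding W1_def by (rule cInf_lower[OF mem bdd])
  then show ?thesis using cost by simp
qed


lemma scaleR_mv: "(r *\<^sub>R A) *v x = r *\<^sub>R (A *v (x :: complex^'n))"
  unfolding vec_eq_iff
proof
  fix i
  have "((r *\<^sub>R A) *v x) $ i = (\<Sum>j\<in>UNIV. complex_of_real r * (A$i$j * x$j))"
    unfolding matrix_vector_mult_def vec_lambda_beta
    by (simp only: vector_scaleR_component) (simp add: scaleR_conv_of_real mult.assoc)
  also have "\<dots> = complex_of_real r * (A *v x) $ i"
    by (simp add: matrix_vector_mult_def sum_distrib_left)
  finally show "((r *\<^sub>R A) *v x) $ i = (r *\<^sub>R (A *v x)) $ i"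
    by (simp only: vector_scaleR_component) (simp add: scaleR_conv_of_real)
qed

lemma ebasisI: "hermitian M \<Longrightarrow> finite B \<Longrightarrow> onset B \<Longrightarrow> eigset M B \<Longrightarrow> (\<forall>x. (\<forall>u\<in>B. cinner u x = 0) \<longrightarrow> x = 0) \<Longrightarrow> ebasis M B"
  by (simp add: ebasis_def)

lemma ebasis_exists: "hermitian M \<Longrightarrow> \<exists>B. ebasis M B"
  using eigenbasis_exists ebasisI by metis

lemma bauer_fike:
  fixes H \<Delta> M :: "complex^'n^'n"
  assumes bH: "ebasis H BH" and bM: "ebasis M B" and hD: "hermitian \<Delta>"
    and Meq: "M = H + s *\<^sub>R \<Delta>" and u: "u \<in> B"
  shows "\<exists>v\<in>BH. \<bar>ebasis.ev H v - ebasis.ev M u\<bar> \<le> \<bar>s\<bar> * spec_norm \<Delta>"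
proof (rule ccontr)
  assume "\<not> ?thesis"
  then have far: "\<forall>v\<in>BH. \<bar>ebasis.ev H v - ebasis.ev M u\<bar> > \<bar>s\<bar> * spec_norm \<Delta>" by auto
  define e where "e = ebasis.ev M u"
  define \<epsilon> where "\<epsilon> = \<bar>s\<bar> * spec_norm \<Delta>"
  have snD: "spec_norm \<Delta> \<ge> 0" unfolding spec_norm_def
    by (rule onorm_pos_le[OF matrix_vector_mul_bounded_linear])
  have eps0: "\<epsilon> \<ge> 0" using snD by (simp add: \<epsilon>_def)
  have "norm u ^ 2 = 1" using ebasis.unit[OF bM u] Re_cinner_self[of u] by simp
  then have nu: "norm u = 1" by (smt (verit) norm_ge_zero power2_eq_1_iff)
  have Mu: "M *v u = complex_of_real e *s u" using ebasis.eigv[OF bM u] by (simp add: e_def)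
  define y where "y = H *v u - complex_of_real e *s u"
  have y_eq: "y = - (s *\<^sub>R (\<Delta> *v u))"
    using Mu unfolding y_def Meq by (simp add: matrix_vector_mult_add_rdistrib scaleR_mv algebra_simps)
  have ny: "norm y \<le> \<epsilon>"
  proof -
    have "norm y = \<bar>s\<bar> * norm (\<Delta> *v u)" by (simp add: y_eq)
    also have "\<dots> \<le> \<bar>s\<bar> * (spec_norm \<Delta> * norm u)"
      unfolding spec_norm_def
      by (intro mult_left_mono onorm[OF matrix_vector_mul_bounded_linear]) simp
    finally show ?thesis by (simp add: nu \<epsilon>_def)
  qed
  have BHne: "BH \<noteq> {}" by (rule ebasis.Bne[OF bH])
  have finBH: "finite BH" using bH by (simp add: ebasis_def)
  define \<delta> where "\<delta> = Min ((\<lambda>v. \<bar>ebasis.ev H v - e\<bar>) ` BH)"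
  have dle: "\<delta> \<le> \<bar>ebasis.ev H v - e\<bar>" if "v \<in> BH" for v
    unfolding \<delta>_def using finBH that by (intro Min_le) auto
  have dgt: "\<delta> > \<epsilon>"
  proof -
    have "\<delta> \<in> (\<lambda>v. \<bar>ebasis.ev H v - e\<bar>) ` BH" unfolding \<delta>_def using finBH BHne by (intro Min_in) auto
    then show ?thesis using far by (auto simp: e_def \<epsilon>_def)
  qed
  have cy: "cinner v y = complex_of_real (ebasis.ev H v - e) * cinner v u" if "v \<in> BH" for v
    using ebasis.cM[OF bH that, of u] by (simp add: y_def cinner_diff_right cinner_scale_right algebra_simps)
  have "norm y ^ 2 = (\<Sum>v\<in>BH. (cmod (cinner v y))^2)" by (rule ebasis.parseval[OF bH])
  also have "\<dots> = (\<Sum>v\<in>BH. (ebasis.ev H v - e)^2 * (cmod (cinner v u))^2)"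
  proof (rule sum.cong[OF refl])
    fix v assume v: "v \<in> BH"
    show "(cmod (cinner v y))^2 = (ebasis.ev H v - e)^2 * (cmod (cinner v u))^2"
      unfolding cy[OF v] norm_mult norm_of_real power_mult_distrib power2_abs ..
  qed
  also have "\<dots> \<ge> (\<Sum>v\<in>BH. \<delta>^2 * (cmod (cinner v u))^2)"
  proof (rule sum_mono)
    fix v assume v: "v \<in> BH"
    have "\<delta> \<ge> 0" using dgt eps0 by simp
    then have "\<delta>^2 \<le> (ebasis.ev H v - e)^2"
      using dle[OF v] by (metis abs_le_square_iff abs_of_nonneg)
    then show "\<delta>^2 * (cmod (cinner v u))^2 \<le> (ebasis.ev H v - e)^2 * (cmod (cinner v u))^2"
      by (intro mult_right_mono) auto
  qed
  finally have "(\<Sum>v\<in>BH. \<delta>^2 * (cmod (cinner v u))^2) \<le> norm y ^ 2" .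
  moreover have "(\<Sum>v\<in>BH. \<delta>^2 * (cmod (cinner v u))^2) = \<delta>^2"
    using ebasis.parseval[OF bH, of u] nu by (simp add: sum_distrib_left[symmetric])
  ultimately have "\<delta>^2 \<le> norm y ^ 2" by simp
  moreover have "norm y ^ 2 < \<delta>^2"
    using ny dgt eps0 by (intro power_strict_mono) auto
  ultimately show False by simp
qed


lemma gap_uniq:
  fixes H :: "complex^'n^'n"
  assumes lamspec: "lam ` {1..m} = spec H" and inj: "inj_on lam {1..m}"
    and gc: "ereal \<epsilon> < gap H / 2" and j: "j \<in> {1..m}" and j': "j' \<in> {1..m}"
    and d1: "\<bar>\<mu> - lam j\<bar> \<le> \<epsilon>" and d2: "\<bar>\<mu> - lam j'\<bar> \<le> \<epsilon>"
  shows "j = j'"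
proof (rule ccontr)
  assume ne: "j \<noteq> j'"
  then have lne: "lam j \<noteq> lam j'" using inj j j' by (meson inj_on_eq_iff)
  have "lam j \<in> spec H" "lam j' \<in> spec H" using lamspec j j' by auto
  then have "ereal \<bar>lam j - lam j'\<bar> \<in> {ereal \<bar>l - m\<bar> | l m. l \<in> spec H \<and> m \<in> spec H \<and> l \<noteq> m}"
    using lne by blast
  then have "gap H \<le> ereal \<bar>lam j - lam j'\<bar>" unfolding gap_def by (rule Inf_lower)
  moreover have "\<bar>lam j - lam j'\<bar> \<le> 2 * \<epsilon>" using d1 d2 by simp
  ultimately have g2: "gap H \<le> ereal (2 * \<epsilon>)" by (meson ereal_less_eq(3) order_trans)
  show False
  proof (cases "gap H")
    case (real g)
    then have "\<epsilon> < g / 2" using gc by simp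
    moreover have "g \<le> 2 * \<epsilon>" using g2 real by simp
    ultimately show False by simp
  next
    case PInf
    then show False using g2 by simp
  next
    case MInf
    then show False using gc by simp
  qed
qed

lemma cluster:
  fixes H \<Delta> M :: "complex^'n^'n"
  assumes bH: "ebasis H BH" and bM: "ebasis M B" and hD: "hermitian \<Delta>"
    and Meq: "M = H + s *\<^sub>R \<Delta>" and lamspec: "lam ` {1..m} = spec H" and inj: "inj_on lam {1..m}"
    and gc: "ereal (\<bar>s\<bar> * spec_norm \<Delta>) < gap H / 2"
  shows "\<exists>k. (\<forall>u\<in>B. k u \<in> {1..m} \<and> \<bar>ebasis.ev M u - lam (k u)\<bar> \<le> \<bar>s\<bar> * spec_norm \<Delta>)
     \<and> (\<forall>j\<in>{1..m}. Ph H \<Delta> lam s j = projC {u\<in>B. k u = j})"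
proof -
  have ex: "\<forall>u\<in>B. \<exists>j\<in>{1..m}. \<bar>ebasis.ev M u - lam j\<bar> \<le> \<bar>s\<bar> * spec_norm \<Delta>"
  proof
    fix u assume u: "u \<in> B"
    obtain v where v: "v \<in> BH" and dv: "\<bar>ebasis.ev H v - ebasis.ev M u\<bar> \<le> \<bar>s\<bar> * spec_norm \<Delta>"
      using bauer_fike[OF bH bM hD Meq u] by blast
    have "ebasis.ev H v \<in> spec H" using ebasis.spec_eq[OF bH] v by simp
    then obtain j where j: "j \<in> {1..m}" "lam j = ebasis.ev H v" using lamspec by force
    show "\<exists>j\<in>{1..m}. \<bar>ebasis.ev M u - lam j\<bar> \<le> \<bar>s\<bar> * spec_norm \<Delta>"
      using j dv by (intro bexI[of _ j]) auto
  qed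
  then obtain k where k: "\<forall>u\<in>B. k u \<in> {1..m} \<and> \<bar>ebasis.ev M u - lam (k u)\<bar> \<le> \<bar>s\<bar> * spec_norm \<Delta>"
    by metis
  have "Ph H \<Delta> lam s j = projC {u\<in>B. k u = j}" if j: "j \<in> {1..m}" for j
  proof -
    have "Ph H \<Delta> lam s j = orth_proj (span (\<Union>{eigenspace M \<mu> | \<mu>. \<mu> \<in> spec M \<and> \<bar>\<mu> - lam j\<bar> \<le> \<bar>s\<bar> * spec_norm \<Delta>}))"
      by (simp add: Ph_def Meq)
    also have "\<dots> = projC {u\<in>B. \<bar>ebasis.ev M u - lam j\<bar> \<le> \<bar>s\<bar> * spec_norm \<Delta>}"
      by (rule ebasis.proj_span[OF bM, of "\<lambda>\<mu>. \<bar>\<mu> - lam j\<bar> \<le> \<bar>s\<bar> * spec_norm \<Delta>", simplified])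
    also have "{u\<in>B. \<bar>ebasis.ev M u - lam j\<bar> \<le> \<bar>s\<bar> * spec_norm \<Delta>} = {u\<in>B. k u = j}"
    proof safe
      fix u assume u: "u \<in> B" and d: "\<bar>ebasis.ev M u - lam j\<bar> \<le> \<bar>s\<bar> * spec_norm \<Delta>"
      show "k u = j" using gap_uniq[OF lamspec inj gc _ j _ d] k u by blast
    next
      fix u assume "u \<in> B" "j = k u"
      then show "\<bar>ebasis.ev M u - lam (k u)\<bar> \<le> \<bar>s\<bar> * spec_norm \<Delta>" using k by blast
    qed
    finally show ?thesis .
  qed
  then show ?thesis using k by blast
qed

lemma pcum_val:
  fixes H \<Delta> M :: "complex^'n^'n"
  assumes bM: "ebasis M B" and Pheq: "\<forall>j\<in>{1..m}. Ph H \<Delta> lam s j = projC {u\<in>B. k u = j}" and h: "h \<le> m"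
  shows "cinner f (Pcum H \<Delta> lam s h *v f)
      = complex_of_real (\<Sum>j\<in>{1..h}. \<Sum>u\<in>{u\<in>B. k u = j}. (cmod (cinner u f))^2)"
proof -
  have "cinner f (Pcum H \<Delta> lam s h *v f) = (\<Sum>j\<in>{1..h}. cinner f (Ph H \<Delta> lam s j *v f))"
    by (simp add: Pcum_def sum_matrix_vector_mult cinner_sum_right)
  also have "\<dots> = (\<Sum>j\<in>{1..h}. complex_of_real (\<Sum>u\<in>{u\<in>B. k u = j}. (cmod (cinner u f))^2))"
  proof (rule sum.cong[OF refl])
    fix j assume j: "j \<in> {1..h}"
    then have "Ph H \<Delta> lam s j = projC {u\<in>B. k u = j}" using Pheq h by auto
    then show "cinner f (Ph H \<Delta> lam s j *v f) = complex_of_real (\<Sum>u\<in>{u\<in>B. k u = j}. (cmod (cinner u f))^2)"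
      using ebasis.cinner_projC[OF bM, of "{u\<in>B. k u = j}" f] by simp
  qed
  finally show ?thesis by simp
qed


theorem lemma3p9:
  fixes H \<Delta> :: "complex^'n^'n" and f :: "complex^'n" and t :: real
    and lam :: "nat \<Rightarrow> real" and m :: nat
  assumes "hermitian H" and "hermitian \<Delta>" and "norm f = 1"
    and "m = card (spec H)"
    and "strict_mono_on {1..m} lam" and "lam ` {1..m} = spec H"
    and "ereal (\<bar>t\<bar> * spec_norm \<Delta>) < gap H / 2"
  shows "W1 (power_spectrum H f) (power_spectrum (H + t *\<^sub>R \<Delta>) f)
    \<le> (\<Sum>h\<in>{1..m-1}. (lam (h+1) - lam h) *
          cmod (cinner f ((Pcum H \<Delta> lam 0 h - Pcum H \<Delta> lam t h) *v f)))
      + \<bar>t\<bar> * spec_norm \<Delta>"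
proof -
  note hH = assms(1) and hD = assms(2) and nf = assms(3) and smono = assms(5)
    and lamspec = assms(6) and gc = assms(7)
  define \<epsilon> where "\<epsilon> = \<bar>t\<bar> * spec_norm \<Delta>"
  define K where "K = H + t *\<^sub>R \<Delta>"
  have snD: "spec_norm \<Delta> \<ge> 0" unfolding spec_norm_def
    by (rule onorm_pos_le[OF matrix_vector_mul_bounded_linear])
  have eps0: "\<epsilon> \<ge> 0" using snD by (simp add: \<epsilon>_def)
  have inj: "inj_on lam {1..m}" using smono by (rule strict_mono_on_imp_inj_on)
  have lmono: "lam i \<le> lam j" if "i \<in> {1..m}" "j \<in> {1..m}" "i \<le> j" for i j
    using smono that by (meson strict_mono_on_leD)
  obtain BH where bH: "ebasis H BH" using ebasis_exists[OF hH] by blast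
  have hK: "hermitian K" unfolding K_def by (intro hermitian_add hermitian_scaleR hH hD)
  obtain BT where bT: "ebasis K BT" using ebasis_exists[OF hK] by blast
  have finBH: "finite BH" using bH by (simp add: ebasis_def)
  have finBT: "finite BT" using bT by (simp add: ebasis_def)
  have gc0: "ereal (\<bar>0::real\<bar> * spec_norm \<Delta>) < gap H / 2"
  proof -
    have "ereal (\<bar>0::real\<bar> * spec_norm \<Delta>) \<le> ereal (\<bar>t\<bar> * spec_norm \<Delta>)" using snD by simp
    then show ?thesis using gc by (rule le_less_trans)
  qed
  have H0: "H = H + (0::real) *\<^sub>R \<Delta>" by simp
  obtain k0 where k0: "\<forall>u\<in>BH. k0 u \<in> {1..m} \<and> \<bar>ebasis.ev H u - lam (k0 u)\<bar> \<le> \<bar>0::real\<bar> * spec_norm \<Delta>"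
    and P0: "\<forall>j\<in>{1..m}. Ph H \<Delta> lam 0 j = projC {u\<in>BH. k0 u = j}"
    using cluster[OF bH bH hD H0 lamspec inj gc0] by blast
  obtain kt where kt: "\<forall>u\<in>BT. kt u \<in> {1..m} \<and> \<bar>ebasis.ev K u - lam (kt u)\<bar> \<le> \<bar>t\<bar> * spec_norm \<Delta>"
    and Pt: "\<forall>j\<in>{1..m}. Ph H \<Delta> lam t j = projC {u\<in>BT. kt u = j}"
    using cluster[OF bH bT hD K_def lamspec inj gc] by blast
  have ev0: "ebasis.ev H u = lam (k0 u)" if "u \<in> BH" for u using k0 that by auto
  have k0m: "k0 ` BH \<subseteq> {1..m}" using k0 by auto
  have ktm: "kt ` BT \<subseteq> {1..m}" using kt by auto
  define w where "w u = (cmod (cinner u f))^2" for u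
  define a where "a i = (\<Sum>v\<in>{v\<in>BH. k0 v = i}. w v)" for i
  define c where "c j = (\<Sum>u\<in>{u\<in>BT. kt u = j}. w u)" for j
  define \<pi> where "\<pi> = cpl a c"
  have w0: "0 \<le> w u" for u by (simp add: w_def)
  have a0: "\<forall>i. 0 \<le> a i" unfolding a_def using w0 by (simp add: sum_nonneg)
  have c0: "\<forall>i. 0 \<le> c i" unfolding c_def using w0 by (simp add: sum_nonneg)
  have sumH: "(\<Sum>v\<in>BH. w v) = 1" using ebasis.parseval[OF bH, of f] nf by (simp add: w_def)
  have sumT: "(\<Sum>u\<in>BT. w u) = 1" using ebasis.parseval[OF bT, of f] nf by (simp add: w_def)
  have sumA: "(\<Sum>i\<in>{1..m}. a i) = 1"
    unfolding a_def using sum.group[OF finBH _ k0m, of w] sumH by simp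
  have sumC: "(\<Sum>i\<in>{1..m}. c i) = 1"
    unfolding c_def using sum.group[OF finBT _ ktm, of w] sumT by simp
  have tot: "cum a m = cum c m" using sumA sumC by (simp add: cum_def)
  have rows: "(\<Sum>j\<in>{1..m}. \<pi> i j) = a i" if "i \<in> {1..m}" for i
    unfolding \<pi>_def by (rule cpl_rows[OF a0 c0 tot that])
  have cols: "(\<Sum>i\<in>{1..m}. \<pi> i j) = c j" if "j \<in> {1..m}" for j
    unfolding \<pi>_def by (rule cpl_cols[OF a0 c0 tot that])
  have pi0: "0 \<le> \<pi> i j" for i j unfolding \<pi>_def by (rule cpl_nonneg)
  have zc: "\<pi> i j = 0" if "i \<in> {1..m}" "j \<in> {1..m}" "c j = 0" for i j
  proof -
    have "(\<Sum>i\<in>{1..m}. \<pi> i j) = 0" using cols[OF that(2)] that(3) by simp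
    then show ?thesis using sum_nonneg_eq_0_iff[of "{1..m}" "\<lambda>i. \<pi> i j"] pi0 that(1) by auto
  qed
  have za: "\<pi> i j = 0" if "i \<in> {1..m}" "j \<in> {1..m}" "a i = 0" for i j
  proof -
    have "(\<Sum>j\<in>{1..m}. \<pi> i j) = 0" using rows[OF that(1)] that(3) by simp
    then show ?thesis using sum_nonneg_eq_0_iff[of "{1..m}" "\<lambda>j. \<pi> i j"] pi0 that(2) by auto
  qed
  have wleA: "w v \<le> a (k0 v)" if "v \<in> BH" for v
    unfolding a_def using that finBH w0 by (intro member_le_sum) auto
  have wleC: "w u \<le> c (kt u)" if "u \<in> BT" for u
    unfolding c_def using that finBT w0 by (intro member_le_sum) auto
  have divA: "w v / a (k0 v) * a (k0 v) = w v" if "v \<in> BH" for v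
    using wleA[OF that] w0[of v] by (cases "a (k0 v) = 0") auto
  have divC: "w u / c (kt u) * c (kt u) = w u" if "u \<in> BT" for u
    using wleC[OF that] w0[of u] by (cases "c (kt u) = 0") auto
  have regT: "(\<Sum>u\<in>BT. g (kt u) * (w u / c (kt u))) = (\<Sum>j\<in>{1..m}. if c j = 0 then 0 else g j)" for g
    unfolding c_def by (rule regroup[OF finBT _ ktm]) simp
  have regH: "(\<Sum>v\<in>BH. g (k0 v) * (w v / a (k0 v))) = (\<Sum>i\<in>{1..m}. if a i = 0 then 0 else g i)" for g
    unfolding a_def by (rule regroup[OF finBH _ k0m]) simp
  define \<rho> where "\<rho> v u = \<pi> (k0 v) (kt u) * (w v / a (k0 v)) * (w u / c (kt u))" for v u
  have rho0: "\<forall>v u. 0 \<le> \<rho> v u"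
    unfolding \<rho>_def using pi0 w0 a0 c0 by (simp add: divide_nonneg_nonneg)
  have rowsum: "(\<Sum>u\<in>BT. \<rho> v u) = w v" if v: "v \<in> BH" for v
  proof -
    have kv: "k0 v \<in> {1..m}" using k0 v by auto
    have "(\<Sum>u\<in>BT. \<rho> v u) = (w v / a (k0 v)) * (\<Sum>u\<in>BT. \<pi> (k0 v) (kt u) * (w u / c (kt u)))"
      unfolding \<rho>_def by (simp add: sum_distrib_left mult_ac)
    also have "\<dots> = (w v / a (k0 v)) * (\<Sum>j\<in>{1..m}. if c j = 0 then 0 else \<pi> (k0 v) j)"
      by (simp only: regT)
    also have "(\<Sum>j\<in>{1..m}. if c j = 0 then 0 else \<pi> (k0 v) j) = (\<Sum>j\<in>{1..m}. \<pi> (k0 v) j)"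
      using zc[OF kv] by (intro sum.cong) auto
    also have "\<dots> = a (k0 v)" by (rule rows[OF kv])
    finally show ?thesis using divA[OF v] by simp
  qed
  have colsum: "(\<Sum>v\<in>BH. \<rho> v u) = w u" if u: "u \<in> BT" for u
  proof -
    have ku: "kt u \<in> {1..m}" using kt u by auto
    have "(\<Sum>v\<in>BH. \<rho> v u) = (w u / c (kt u)) * (\<Sum>v\<in>BH. \<pi> (k0 v) (kt u) * (w v / a (k0 v)))"
      unfolding \<rho>_def by (simp add: sum_distrib_left mult_ac)
    also have "\<dots> = (w u / c (kt u)) * (\<Sum>i\<in>{1..m}. if a i = 0 then 0 else \<pi> i (kt u))"
      using regH[of "\<lambda>i. \<pi> i (kt u)"] by simp
    also have "(\<Sum>i\<in>{1..m}. if a i = 0 then 0 else \<pi> i (kt u)) = (\<Sum>i\<in>{1..m}. \<pi> i (kt u))"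
      using za ku by (intro sum.cong) auto
    also have "\<dots> = c (kt u)" by (rule cols[OF ku])
    finally show ?thesis using divC[OF u] by simp
  qed
  have mu: "\<forall>x. power_spectrum H f x = (\<Sum>v\<in>{v\<in>BH. ebasis.ev H v = x}. \<Sum>u\<in>BT. \<rho> v u)"
    using rowsum by (simp add: ebasis.power_spectrum_eq[OF bH] w_def)
  have nu: "\<forall>y. power_spectrum K f y = (\<Sum>u\<in>{u\<in>BT. ebasis.ev K u = y}. \<Sum>v\<in>BH. \<rho> v u)"
    using colsum by (simp add: ebasis.power_spectrum_eq[OF bT] w_def)
  have W1le: "W1 (power_spectrum H f) (power_spectrum K f)
      \<le> (\<Sum>v\<in>BH. \<Sum>u\<in>BT. \<bar>ebasis.ev H v - ebasis.ev K u\<bar> * \<rho> v u)"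
    by (rule W1_le[OF finBH finBT rho0 mu nu])
  define hh where "hh i j = (\<bar>lam i - lam j\<bar> + \<epsilon>) * \<pi> i j" for i j
  define G where "G i = (\<Sum>j\<in>{1..m}. hh i j)" for i
  have "(\<Sum>v\<in>BH. \<Sum>u\<in>BT. \<bar>ebasis.ev H v - ebasis.ev K u\<bar> * \<rho> v u)
      \<le> (\<Sum>v\<in>BH. \<Sum>u\<in>BT. (\<bar>lam (k0 v) - lam (kt u)\<bar> + \<epsilon>) * \<rho> v u)"
  proof (intro sum_mono mult_right_mono)
    fix v u assume v: "v \<in> BH" and u: "u \<in> BT"
    have "\<bar>ebasis.ev K u - lam (kt u)\<bar> \<le> \<epsilon>" using kt u by (simp add: \<epsilon>_def)
    then show "\<bar>ebasis.ev H v - ebasis.ev K u\<bar> \<le> \<bar>lam (k0 v) - lam (kt u)\<bar> + \<epsilon>"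
      using ev0[OF v] by linarith
    show "0 \<le> \<rho> v u" using rho0 by simp
  qed
  also have "\<dots> = (\<Sum>v\<in>BH. G (k0 v) * (w v / a (k0 v)))"
  proof (rule sum.cong[OF refl])
    fix v assume v: "v \<in> BH"
    have kv: "k0 v \<in> {1..m}" using k0 v by auto
    have "(\<Sum>u\<in>BT. (\<bar>lam (k0 v) - lam (kt u)\<bar> + \<epsilon>) * \<rho> v u)
        = (w v / a (k0 v)) * (\<Sum>u\<in>BT. hh (k0 v) (kt u) * (w u / c (kt u)))"
      unfolding \<rho>_def hh_def by (simp add: sum_distrib_left mult_ac)
    also have "\<dots> = (w v / a (k0 v)) * (\<Sum>j\<in>{1..m}. if c j = 0 then 0 else hh (k0 v) j)"
      by (simp only: regT)
    also have "(\<Sum>j\<in>{1..m}. if c j = 0 then 0 else hh (k0 v) j) = G (k0 v)"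
      unfolding G_def using zc[OF kv] by (intro sum.cong) (auto simp: hh_def)
    finally show "(\<Sum>u\<in>BT. (\<bar>lam (k0 v) - lam (kt u)\<bar> + \<epsilon>) * \<rho> v u) = G (k0 v) * (w v / a (k0 v))"
      by simp
  qed
  also have "\<dots> = (\<Sum>i\<in>{1..m}. if a i = 0 then 0 else G i)" by (rule regH)
  also have "\<dots> = (\<Sum>i\<in>{1..m}. G i)"
    using za by (intro sum.cong) (auto simp: G_def hh_def)
  also have "\<dots> = (\<Sum>i\<in>{1..m}. \<Sum>j\<in>{1..m}. \<pi> i j * \<bar>lam i - lam j\<bar>) + \<epsilon> * (\<Sum>i\<in>{1..m}. \<Sum>j\<in>{1..m}. \<pi> i j)"
    unfolding G_def hh_def by (simp add: algebra_simps sum.distrib sum_distrib_left)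
  also have "(\<Sum>i\<in>{1..m}. \<Sum>j\<in>{1..m}. \<pi> i j) = 1"
    using rows sumA by simp
  also have "(\<Sum>i\<in>{1..m}. \<Sum>j\<in>{1..m}. \<pi> i j * \<bar>lam i - lam j\<bar>)
      = (\<Sum>h\<in>{1..m-1}. (lam (h + 1) - lam h) * \<bar>cum a h - cum c h\<bar>)"
    unfolding \<pi>_def by (rule line_coupling[OF a0 c0 tot lmono])
  also have "(\<Sum>h\<in>{1..m-1}. (lam (h + 1) - lam h) * \<bar>cum a h - cum c h\<bar>)
      = (\<Sum>h\<in>{1..m-1}. (lam (h+1) - lam h) *
          cmod (cinner f ((Pcum H \<Delta> lam 0 h - Pcum H \<Delta> lam t h) *v f)))"
  proof (rule sum.cong[OF refl])
    fix h assume h: "h \<in> {1..m-1}"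
    then have hm: "h \<le> m" by auto
    have e0: "cinner f (Pcum H \<Delta> lam 0 h *v f) = complex_of_real (cum a h)"
      using pcum_val[OF bH P0 hm, of f] by (simp add: cum_def a_def w_def)
    have et: "cinner f (Pcum H \<Delta> lam t h *v f) = complex_of_real (cum c h)"
      using pcum_val[OF bT Pt hm, of f] by (simp add: cum_def c_def w_def)
    have "cinner f ((Pcum H \<Delta> lam 0 h - Pcum H \<Delta> lam t h) *v f) = complex_of_real (cum a h - cum c h)"
      by (simp add: matrix_vector_mult_diff_rdistrib cinner_diff_right e0 et)
    then have "cmod (cinner f ((Pcum H \<Delta> lam 0 h - Pcum H \<Delta> lam t h) *v f)) = \<bar>cum a h - cum c h\<bar>"
      by (simp only: norm_of_real)
    then show "(lam (h + 1) - lam h) * \<bar>cum a h - cum c h\<bar>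
        = (lam (h+1) - lam h) * cmod (cinner f ((Pcum H \<Delta> lam 0 h - Pcum H \<Delta> lam t h) *v f))"
      by simp
  qed
  finally have "(\<Sum>v\<in>BH. \<Sum>u\<in>BT. \<bar>ebasis.ev H v - ebasis.ev K u\<bar> * \<rho> v u)
      \<le> (\<Sum>h\<in>{1..m-1}. (lam (h+1) - lam h) *
          cmod (cinner f ((Pcum H \<Delta> lam 0 h - Pcum H \<Delta> lam t h) *v f))) + \<epsilon>" by simp
  then show ?thesis using W1le unfolding K_def \<epsilon>_def by linarith
qed


end
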